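(* Let $F\in\mathbb{R}[x]$, $\delta\in\mathbb{R}$, and $Q=F\circ x^2\circ(x-\delta)$, with $n=\deg Q\ge6$. 1) If $Ch_2(Q)=Ch_3(Q)=0$, then either $\delta=0$ or $(2\delta)^2=\dfrac{3}{(n-1)(n-2)}$. 2) If $Ch_2(Q)=Ch_4(Q)=Ch_5(Q)=0$, then either $\delta=0$ or $t=2\delta$ satisfies $$\frac{2}{15}(n-1)(n-2)(n-3)(n-4)t^4-(n-2)(n-3)t^2+1=0.$$
   Context: $T_k$ denotes the Chebyshev polynomial of the first kind of degree $k$, $T_k(\cos\phi)=\cos(k\phi)$. Every real polynomial $Q$ of degree $n$ can be uniquely written as $Q=\sum_{k=0}^n d_kT_k$ with $d_k\in\mathbb{R}$; set $Ch_i(Q)=d_{n-i}$ for $0\le i\le n$. $\circ$ denotes composition, so $Q(x)=F((x-\delta)^2)$. *)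

theory Defs
  imports "HOL-Computational_Algebra.Polynomial"
begin

fun cheb :: "nat \<Rightarrow> real poly" where
  "cheb 0 = 1"
| "cheb (Suc 0) = [:0, 1:]"
| "cheb (Suc (Suc k)) = [:0, 2:] * cheb (Suc k) - cheb k"

definition cheb_coeff :: "real poly \<Rightarrow> nat \<Rightarrow> real" where
  "cheb_coeff Q = (THE d. (\<forall>k>degree Q. d k = 0) \<and>
                         Q = (\<Sum>k\<le>degree Q. smult (d k) (cheb k)))"

definition Ch :: "nat \<Rightarrow> real poly \<Rightarrow> real" where
  "Ch i Q = cheb_coeff Q (degree Q - i)"

end

theory Submission
  imports Defs
begin
lemma bin5: "real (K choose 5) = real K * (real K - 1)*(real K-2)*(real K-3)*(real K-4)/120"
  by (simp add: binomial_gbinomial gbinomial_pochhammer' pochhammer_Suc numeral_eq_Suc fact_numeral algebra_simps)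
lemma bin2: "real (K choose 2) = real K * (real K - 1)/2"
  by (simp add: binomial_gbinomial gbinomial_pochhammer' pochhammer_Suc numeral_eq_Suc fact_numeral algebra_simps)

lemma cheb_deg_le: "degree (cheb k) \<le> k"
proof (induction k rule: cheb.induct)
  case (3 k)
  have "degree ([:0, 2:] * cheb (Suc k)) \<le> Suc (Suc k)"
    using degree_mult_le[of "[:0,2::real:]" "cheb (Suc k)"] 3 by simp
  then show ?case using 3 degree_diff_le by (metis cheb.simps(3) le_SucI)
qed auto

lemma coeff_x2: "coeff ([:0, 2:] * p) (Suc m) = 2 * coeff p m" "coeff ([:0, 2:] * p) 0 = 0"
  for p :: "real poly" by (simp_all add: coeff_pCons)

lemma cheb_lead: "coeff (cheb (Suc k)) (Suc k) = 2 ^ k"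
proof (induction k rule: nat_less_induct)
  case (1 k)
  show ?case
  proof (cases k)
    case 0 then show ?thesis by simp
  next
    case (Suc j)
    have "coeff (cheb j) (Suc (Suc j)) = 0" using cheb_deg_le[of j] by (simp add: coeff_eq_0)
    then show ?thesis using 1 Suc by (simp add: coeff_x2)
  qed
qed

lemma cheb_c1: "coeff (cheb (k+2)) k = - real (k+2) * 2 ^ k / 2"
proof (induction k)
  case 0 then show ?case by (simp add: numeral_eq_Suc)
next
  case (Suc k)
  have e: "cheb (Suc k + 2) = [:0,2:] * cheb (k+2) - cheb (Suc k)" by (simp add: numeral_eq_Suc)
  have "coeff (cheb (Suc k + 2)) (Suc k) = 2 * coeff (cheb (k+2)) k - coeff (cheb (Suc k)) (Suc k)"
    by (simp only: e coeff_diff coeff_x2)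
  then show ?case using Suc cheb_lead[of k] by (simp add: algebra_simps del: cheb.simps)
qed

lemma cheb_c2: "coeff (cheb (k+4)) k = real (k+4) * real (k+1) * 2 ^ k / 4"
proof (induction k)
  case 0 then show ?case by (simp add: numeral_eq_Suc)
next
  case (Suc k)
  have e: "cheb (Suc k + 4) = [:0,2:] * cheb (k+4) - cheb (Suc k + 2)" by (simp add: numeral_eq_Suc)
  have "coeff (cheb (Suc k + 4)) (Suc k) = 2 * coeff (cheb (k+4)) k - coeff (cheb (Suc k + 2)) (Suc k)"
    by (simp only: e coeff_diff coeff_x2)
  then show ?case using Suc cheb_c1[of "Suc k"] by (simp add: algebra_simps del: cheb.simps)
qed

lemma cheb_par: "odd (k + m) \<Longrightarrow> coeff (cheb k) m = 0"
proof (induction k arbitrary: m rule: cheb.induct)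
  case (3 k)
  show ?case
  proof (cases m)
    case 0 then show ?thesis using 3 by (simp add: coeff_x2)
  next
    case (Suc j) then show ?thesis using 3 by (simp add: coeff_x2)
  qed
qed (auto simp: coeff_pCons split: nat.splits intro: odd_pos)

lemma coeff_cheb_sum: "coeff (\<Sum>k\<le>N. smult (e k) (cheb k)) m = (\<Sum>k\<le>N. e k * coeff (cheb k) m)"
  by (simp add: coeff_sum)

lemma cheb_lead': "coeff (cheb k) k \<noteq> 0"
  by (cases k) (simp_all add: cheb_lead)

lemma cheb_indep: "(\<Sum>k\<le>N. smult (e k) (cheb k)) = 0 \<Longrightarrow> k \<le> N \<Longrightarrow> e k = 0"
proof (induction N arbitrary: k)
  case 0 then show ?case by simp
next
  case (Suc N)
  have z: "(\<Sum>k\<le>N. e k * coeff (cheb k) (Suc N)) = 0"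
    by (rule sum.neutral) (auto intro!: coeff_eq_0 le_less_trans[OF cheb_deg_le])
  have "coeff (\<Sum>k\<le>Suc N. smult (e k) (cheb k)) (Suc N) = 0" using Suc.prems by simp
  then have "e (Suc N) * coeff (cheb (Suc N)) (Suc N) = 0"
    unfolding coeff_cheb_sum using z by simp
  then have eS: "e (Suc N) = 0" using cheb_lead'[of "Suc N"] by simp
  then have "(\<Sum>k\<le>N. smult (e k) (cheb k)) = 0" using Suc.prems by simp
  then show ?case using Suc eS by (cases "k = Suc N") auto
qed

lemma cheb_exists: "degree p \<le> N \<Longrightarrow> \<exists>d. (\<forall>k>N. d k = 0) \<and> p = (\<Sum>k\<le>N. smult (d k) (cheb k))"
proof (induction N arbitrary: p)
  case 0
  then obtain c where p: "p = [:c:]" using degree0_coeffs by blast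
  show ?case by (rule exI[of _ "\<lambda>k. if k = 0 then c else 0"]) (simp add: p)
next
  case (Suc N)
  define c where "c = coeff p (Suc N) / coeff (cheb (Suc N)) (Suc N)"
  define q where "q = p - smult c (cheb (Suc N))"
  have "degree q \<le> Suc N" unfolding q_def using Suc.prems cheb_deg_le[of "Suc N"]
    by (meson degree_diff_le degree_smult_le order_trans)
  moreover have "coeff q (Suc N) = 0" unfolding q_def c_def using cheb_lead'[of "Suc N"] by simp
  ultimately have "degree q \<le> N"
  proof (cases "q = 0")
    case False
    assume a: "degree q \<le> Suc N" "coeff q (Suc N) = 0"
    have "degree q \<noteq> Suc N" using a(2) False by (metis leading_coeff_0_iff)
    then show ?thesis using a(1) by simp
  qed simp
  then obtain d where d: "\<forall>k>N. d k = 0" "q = (\<Sum>k\<le>N. smult (d k) (cheb k))" using Suc.IH by blast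
  have "p = q + smult c (cheb (Suc N))" unfolding q_def by simp
  also have "\<dots> = (\<Sum>k\<le>Suc N. smult ((d(Suc N := c)) k) (cheb k))"
    using d(2) by (simp add: sum.atMost_Suc)
  finally show ?case using d(1) by (intro exI[of _ "d(Suc N := c)"]) auto
qed

lemma cheb_coeff_char:
  assumes "\<forall>k>degree Q. d k = 0" "Q = (\<Sum>k\<le>degree Q. smult (d k) (cheb k))"
  shows "cheb_coeff Q = d"
  unfolding cheb_coeff_def
proof (rule the_equality)
  show "(\<forall>k>degree Q. d k = 0) \<and> Q = (\<Sum>k\<le>degree Q. smult (d k) (cheb k))" using assms by blast
next
  fix d' assume h: "(\<forall>k>degree Q. d' k = 0) \<and> Q = (\<Sum>k\<le>degree Q. smult (d' k) (cheb k))"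
  have "(\<Sum>k\<le>degree Q. smult (d' k - d k) (cheb k)) = 0"
    using h assms(2) by (simp add: smult_diff_left sum_subtractf)
  then have "\<forall>k\<le>degree Q. d' k - d k = 0" using cheb_indep[of "\<lambda>k. d' k - d k" "degree Q"] by blast
  then show "d' = d" using h assms(1) by (metis eq_iff_diff_eq_0 ext not_le)
qed

lemma cheb_coeff_expand: "Q = (\<Sum>k\<le>degree Q. smult (cheb_coeff Q k) (cheb k))"
proof -
  obtain d where "(\<forall>k>degree Q. d k = 0) \<and> Q = (\<Sum>k\<le>degree Q. smult (d k) (cheb k))"
    using cheb_exists[of Q "degree Q"] by auto
  then show ?thesis using cheb_coeff_char by metis
qed

lemma pcompose_monom': "pcompose (monom c i) q = smult c (q ^ i)"
  by (induction i) (simp_all add: monom_Suc pcompose_pCons monom_0)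

lemma lin: "coeff ([:a,1:]^(k+r)) k = real((k+r) choose r) * a^r"
  using coeff_linear_poly_power[of k "k+r" a 1] binomial_symmetric[of k "k+r"] by simp

lemma lin0: "k < m \<Longrightarrow> coeff ([:a::real,1:]^k) m = 0"
  by (rule coeff_eq_0) (metis degree_linear_power)

lemma sum3: "(\<Sum>i\<le>(M::nat)+3. g i) = (\<Sum>i\<le>M. g i) + g (M+1) + g (M+2) + g (M+3)"
  by (simp add: numeral_eq_Suc)
lemma sum6: "(\<Sum>i\<le>(M::nat)+6. g i) = (\<Sum>i\<le>M. g i) + g (M+1) + g (M+2) + g (M+3) + g (M+4) + g (M+5) + g (M+6)"
  by (simp add: numeral_eq_Suc)

lemma lr0: "m = K \<Longrightarrow> coeff ([:a::real,1:]^K) m = 1"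
  using coeff_linear_power by blast
lemma lr1: "m + 1 = K \<Longrightarrow> coeff ([:a::real,1:]^K) m = real K * a"
  using lin[of a m 1] by auto
lemma lr2: "m + 2 = K \<Longrightarrow> coeff ([:a::real,1:]^K) m = real K * (real K - 1) / 2 * a^2"
  using lin[of a m 2] by (auto simp: binomial_gbinomial gbinomial_pochhammer' pochhammer_Suc numeral_eq_Suc fact_numeral algebra_simps)
lemma lr3: "m + 3 = K \<Longrightarrow> coeff ([:a::real,1:]^K) m = real K * (real K - 1) * (real K - 2) / 6 * a^3"
  using lin[of a m 3] by (auto simp: binomial_gbinomial gbinomial_pochhammer' pochhammer_Suc numeral_eq_Suc fact_numeral algebra_simps)
lemma lr4: "m + 4 = K \<Longrightarrow> coeff ([:a::real,1:]^K) m = real K * (real K - 1) * (real K - 2) * (real K - 3) / 24 * a^4"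
  using lin[of a m 4] by (auto simp: binomial_gbinomial gbinomial_pochhammer' pochhammer_Suc numeral_eq_Suc fact_numeral algebra_simps)
lemma lr5: "m + 5 = K \<Longrightarrow> coeff ([:a::real,1:]^K) m = real K * (real K - 1) * (real K - 2) * (real K - 3) * (real K - 4) / 120 * a^5"
  using lin[of a m 5] by (auto simp: binomial_gbinomial gbinomial_pochhammer' pochhammer_Suc numeral_eq_Suc fact_numeral algebra_simps)

lemma ch0: "1 \<le> m \<Longrightarrow> k = m \<Longrightarrow> coeff (cheb k) m = 2^m / 2"
  using cheb_lead[of "m - 1"] by (cases m) auto
lemma ch1: "k = m + 2 \<Longrightarrow> coeff (cheb k) m = - real k * 2^m / 2"
  using cheb_c1 by simp
lemma ch2: "k = m + 4 \<Longrightarrow> coeff (cheb k) m = real k * (real k - 3) * 2^m / 4"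
  using cheb_c2[of m] by (simp add: algebra_simps)
lemma chz: "k < m \<Longrightarrow> coeff (cheb k) m = 0"
  by (rule coeff_eq_0) (meson cheb_deg_le le_less_trans)

lemma cheb_side:
  assumes "degree Q = 2*M+6"
  shows "coeff Q (2*M+6) = cheb_coeff Q (2*M+6) * (2^(2*M) * 32)"
    "coeff Q (2*M+5) = cheb_coeff Q (2*M+5) * (2^(2*M) * 16)"
    "coeff Q (2*M+4) = cheb_coeff Q (2*M+4) * (2^(2*M) * 8) - cheb_coeff Q (2*M+6) * (2*real M+6) * (2^(2*M) * 8)"
    "coeff Q (2*M+3) = cheb_coeff Q (2*M+3) * (2^(2*M) * 4) - cheb_coeff Q (2*M+5) * (2*real M+5) * (2^(2*M) * 4)"
    "coeff Q (2*M+2) = cheb_coeff Q (2*M+2) * (2^(2*M) * 2) - cheb_coeff Q (2*M+4) * (2*real M+4) * (2^(2*M) * 2)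
        + cheb_coeff Q (2*M+6) * (2*real M+6) * (2*real M+3) * 2^(2*M)"
    "coeff Q (2*M+1) = cheb_coeff Q (2*M+1) * 2^(2*M) - cheb_coeff Q (2*M+3) * (2*real M+3) * 2^(2*M)
        + cheb_coeff Q (2*M+5) * (2*real M+5) * (2*real M+2) * 2^(2*M) / 2"
proof -
  define d where "d = cheb_coeff Q"
  have e: "coeff Q m = (\<Sum>k\<le>2*M+6. d k * coeff (cheb k) m)" for m
    using cheb_coeff_expand[of Q] assms unfolding d_def by (metis coeff_cheb_sum)
  have z: "(\<Sum>k\<le>2*M. d k * coeff (cheb k) (2*M+j)) = 0" if "j \<ge> 1" for j
    by (rule sum.neutral) (use that in \<open>auto simp: chz\<close>)
  show "coeff Q (2*M+6) = cheb_coeff Q (2*M+6) * (2^(2*M) * 32)"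
    unfolding e sum6 z[of 6, simplified] d_def[symmetric]
    by (simp add: chz ch0 ch1 ch2 cheb_par power_add del: cheb.simps)
  show "coeff Q (2*M+5) = cheb_coeff Q (2*M+5) * (2^(2*M) * 16)"
    unfolding e sum6 z[of 5, simplified] d_def[symmetric]
    by (simp add: chz ch0 ch1 ch2 cheb_par power_add del: cheb.simps)
  show "coeff Q (2*M+4) = cheb_coeff Q (2*M+4) * (2^(2*M) * 8) - cheb_coeff Q (2*M+6) * (2*real M+6) * (2^(2*M) * 8)"
    unfolding e sum6 z[of 4, simplified] d_def[symmetric]
    by (simp add: chz ch0 ch1 ch2 cheb_par power_add field_simps del: cheb.simps)
  show "coeff Q (2*M+3) = cheb_coeff Q (2*M+3) * (2^(2*M) * 4) - cheb_coeff Q (2*M+5) * (2*real M+5) * (2^(2*M) * 4)"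
    unfolding e sum6 z[of 3, simplified] d_def[symmetric]
    by (simp add: chz ch0 ch1 ch2 cheb_par power_add field_simps del: cheb.simps)
  show "coeff Q (2*M+2) = cheb_coeff Q (2*M+2) * (2^(2*M) * 2) - cheb_coeff Q (2*M+4) * (2*real M+4) * (2^(2*M) * 2)
        + cheb_coeff Q (2*M+6) * (2*real M+6) * (2*real M+3) * 2^(2*M)"
    unfolding e sum6 z[of 2, simplified] d_def[symmetric]
    by (simp add: chz ch0 ch1 ch2 cheb_par power_add field_simps del: cheb.simps)
  show "coeff Q (2*M+1) = cheb_coeff Q (2*M+1) * 2^(2*M) - cheb_coeff Q (2*M+3) * (2*real M+3) * 2^(2*M)
        + cheb_coeff Q (2*M+5) * (2*real M+5) * (2*real M+2) * 2^(2*M) / 2"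
    unfolding e sum6 z[of 1, simplified] d_def[symmetric]
    by (simp add: chz ch0 ch1 ch2 cheb_par power_add field_simps del: cheb.simps)
qed

lemma F_side:
  fixes F :: "real poly" and a :: real and M :: nat
  assumes "degree F = M+3"
  defines "Q \<equiv> pcompose F ([:a,1:]^2)" and "x \<equiv> real M"
  shows "coeff Q (2*M+6) = coeff F (M+3)"
    "coeff Q (2*M+5) = coeff F (M+3) * (2*x+6) * a"
    "coeff Q (2*M+4) = coeff F (M+3) * (2*x+6)*(2*x+5)/2 * a^2 + coeff F (M+2)"
    "coeff Q (2*M+3) = coeff F (M+3) * (2*x+6)*(2*x+5)*(2*x+4)/6 * a^3 + coeff F (M+2) * (2*x+4) * a"
    "coeff Q (2*M+2) = coeff F (M+3) * (2*x+6)*(2*x+5)*(2*x+4)*(2*x+3)/24 * a^4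
       + coeff F (M+2) * (2*x+4)*(2*x+3)/2 * a^2 + coeff F (M+1)"
    "coeff Q (2*M+1) = coeff F (M+3) * (2*x+6)*(2*x+5)*(2*x+4)*(2*x+3)*(2*x+2)/120 * a^5
       + coeff F (M+2) * (2*x+4)*(2*x+3)*(2*x+2)/6 * a^3 + coeff F (M+1) * (2*x+2) * a"
proof -
  have "Q = pcompose (\<Sum>i\<le>M+3. monom (coeff F i) i) ([:a,1:]^2)"
    unfolding Q_def using poly_as_sum_of_monoms[of F] assms(1) by simp
  then have "Q = (\<Sum>i\<le>M+3. smult (coeff F i) ([:a,1:]^(2*i)))"
    by (simp add: pcompose_sum pcompose_monom' power_mult)
  then have e: "coeff Q m = (\<Sum>i\<le>M+3. coeff F i * coeff ([:a,1:]^(2*i)) m)" for m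
    by (simp add: coeff_sum)
  have z: "(\<Sum>i\<le>M. coeff F i * coeff ([:a,1:]^(2*i)) (2*M+j)) = 0" if "j \<ge> 1" for j
    by (rule sum.neutral) (use that in \<open>auto simp: lin0\<close>)
  show "coeff Q (2*M+6) = coeff F (M+3)"
    unfolding e sum3 z[of 6, simplified] by (simp add: lr0 lin0 del: power_Suc)
  show "coeff Q (2*M+5) = coeff F (M+3) * (2*x+6) * a"
    unfolding e sum3 z[of 5, simplified] x_def by (simp add: lr0 lr1 lin0 field_simps del: power_Suc)
  show "coeff Q (2*M+4) = coeff F (M+3) * (2*x+6)*(2*x+5)/2 * a^2 + coeff F (M+2)"
    unfolding e sum3 z[of 4, simplified] x_def by (simp add: lr0 lr1 lr2 lin0 field_simps del: power_Suc)
  show "coeff Q (2*M+3) = coeff F (M+3) * (2*x+6)*(2*x+5)*(2*x+4)/6 * a^3 + coeff F (M+2) * (2*x+4) * a"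
    unfolding e sum3 z[of 3, simplified] x_def by (simp add: lr0 lr1 lr2 lr3 lin0 field_simps del: power_Suc)
  show "coeff Q (2*M+2) = coeff F (M+3) * (2*x+6)*(2*x+5)*(2*x+4)*(2*x+3)/24 * a^4
       + coeff F (M+2) * (2*x+4)*(2*x+3)/2 * a^2 + coeff F (M+1)"
    unfolding e sum3 z[of 2, simplified] x_def by (simp add: lr0 lr1 lr2 lr3 lr4 lin0 field_simps del: power_Suc)
  show "coeff Q (2*M+1) = coeff F (M+3) * (2*x+6)*(2*x+5)*(2*x+4)*(2*x+3)*(2*x+2)/120 * a^5
       + coeff F (M+2) * (2*x+4)*(2*x+3)*(2*x+2)/6 * a^3 + coeff F (M+1) * (2*x+2) * a"
    unfolding e sum3 z[of 1, simplified] x_def by (simp add: lr0 lr1 lr2 lr3 lr4 lr5 lin0 field_simps del: power_Suc)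
qed

theorem lemma3p4:
  fixes F :: "real poly" and \<delta> :: real and Q :: "real poly" and n :: nat
  assumes hQ: "Q = pcompose F (pcompose [:0, 0, 1:] [:-\<delta>, 1:])"
    and hn: "n = degree Q" and n6: "n \<ge> 6"
  shows "(Ch 2 Q = 0 \<and> Ch 3 Q = 0 \<longrightarrow>
            \<delta> = 0 \<or> (2 * \<delta>)^2 = 3 / ((real n - 1) * (real n - 2)))
       \<and> (Ch 2 Q = 0 \<and> Ch 4 Q = 0 \<and> Ch 5 Q = 0 \<longrightarrow>
            \<delta> = 0 \<or> (let t = 2 * \<delta> in
              2 / 15 * (real n - 1) * (real n - 2) * (real n - 3) * (real n - 4) * t^4
              - (real n - 2) * (real n - 3) * t^2 + 1 = 0))"
proof -
  have L2: "pcompose [:0,0,1:] [:-\<delta>,1:] = [:-\<delta>,1:]^2"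
    by (simp add: pcompose_pCons power2_eq_square)
  have QQ: "Q = pcompose F ([:-\<delta>,1:]^2)" using hQ L2 by simp
  have degQ: "degree Q = degree F * 2" by (simp add: QQ degree_pcompose degree_linear_power)
  define M where "M = degree F - 3"
  have M: "degree F = M + 3" using n6 hn degQ unfolding M_def by linarith
  have nM: "n = 2*M+6" using hn degQ M by simp
  define x where "x = real M"
  define P :: real where "P = 2^(2*M)"
  define f3 where "f3 = coeff F (M+3)"
  define f2 where "f2 = coeff F (M+2)"
  define f1 where "f1 = coeff F (M+1)"
  define D where "D j = cheb_coeff Q (2*M+j)" for j
  have P0: "P > 0" unfolding P_def by simp
  have x0: "x \<ge> 0" unfolding x_def by simp
  have rn: "real n = 2*x+6" unfolding nM x_def by simp
  have f3nz: "f3 \<noteq> 0" unfolding f3_def using M[symmetric]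
    by (metis add_eq_0_iff_both_eq_0 leading_coeff_0_iff zero_neq_numeral degree_0)
  note FS = F_side[OF M, of "-\<delta>", folded QQ x_def f3_def f2_def f1_def]
  have dQ': "degree Q = 2*M+6" using degQ M by simp
  note CS = cheb_side[OF dQ', folded x_def P_def D_def]
  have Ch: "Ch i Q = D (6 - i)" if "i \<le> 6" for i
    unfolding Ch_def D_def using degQ M that by (simp add: algebra_simps)
  have Ch2: "Ch 2 Q = D 4" and Ch3: "Ch 3 Q = D 3" and Ch4: "Ch 4 Q = D 2" and Ch5: "Ch 5 Q = D 1"
    using Ch by auto
  define E where "E j = D j * P" for j
  have EZ: "D j = 0 \<longleftrightarrow> E j = 0" for j unfolding E_def using P0 by simp
  have c6: "coeff Q (2*M+6) = 32 * E 6" using CS(1) unfolding E_def by (simp add: algebra_simps)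
  have c5: "coeff Q (2*M+5) = 16 * E 5" using CS(2) unfolding E_def by (simp add: algebra_simps)
  have c4: "coeff Q (2*M+4) = 8 * E 4 - 8*(2*x+6) * E 6" using CS(3) unfolding E_def by (simp add: algebra_simps)
  have c3: "coeff Q (2*M+3) = 4 * E 3 - 4*(2*x+5) * E 5" using CS(4) unfolding E_def by (simp add: algebra_simps)
  have c2: "coeff Q (2*M+2) = 2 * E 2 - 2*(2*x+4) * E 4 + (2*x+6)*(2*x+3) * E 6"
    using CS(5) unfolding E_def by (simp add: algebra_simps)
  have c1: "coeff Q (2*M+1) = E 1 - (2*x+3) * E 3 + (2*x+5)*(2*x+2)/2 * E 5"
    using CS(6) unfolding E_def by (simp add: field_simps)
  note a6 = trans[OF FS(1)[symmetric] c6]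
  note a5 = trans[OF FS(2)[symmetric] c5]
  note a4 = trans[OF FS(3)[symmetric] c4]
  note a3 = trans[OF FS(4)[symmetric] c3]
  note a2 = trans[OF FS(5)[symmetric] c2]
  note a1 = trans[OF FS(6)[symmetric] c1]
  have hE6: "E 6 = f3 / 32" using a6 by simp
  have hE5: "E 5 = - f3 * (2*x+6) * \<delta> / 16" using a5 by simp
  have part1: "\<delta> = 0 \<or> (2 * \<delta>)^2 = 3 / ((real n - 1) * (real n - 2))"
    if h4: "E 4 = 0" and h3: "E 3 = 0"
  proof -
    have hf2: "f2 = - f3 * (2*x+6) / 4 - f3 * (2*x+6)*(2*x+5)/2 * \<delta>^2"
      using a4 h4 unfolding hE6 by (simp add: field_simps)
    have e3: "f3 * (2*x+6)*(2*x+5)*(2*x+4)/6 * (-\<delta>)^3 + f2 * (2*x+4) * (-\<delta>)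
        = - 4*(2*x+5) * (- f3 * (2*x+6) * \<delta> / 16)"
      using a3 h3 unfolding hE5 by (simp add: field_simps)
    have T: "f3 * \<delta> * (2*x+6) * (4*\<delta>^2*(2*x+5)*(2*x+4) - 3) = 0"
      using e3 unfolding hf2 by (simp add: field_simps power3_eq_cube power2_eq_square)
    then have "\<delta> = 0 \<or> 4*\<delta>^2*(2*x+5)*(2*x+4) - 3 = 0" using f3nz x0 by simp
    then show ?thesis
    proof
      assume h: "4*\<delta>^2*(2*x+5)*(2*x+4) - 3 = 0"
      have r1: "real n - 1 = 2*x+5" "real n - 2 = 2*x+4" by (simp_all add: rn)
      have nz: "(2*x+5)*(2*x+4) \<noteq> 0" using x0 by (simp add: add_nonneg_eq_0_iff)
      have "(2*\<delta>)^2 = 3/((2*x+5)*(2*x+4))" using h nz by (simp add: field_simps power_mult_distrib)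
      then show ?thesis unfolding r1 by simp
    qed simp
  qed
  have part2: "\<delta> = 0 \<or> (let t = 2 * \<delta> in
              2 / 15 * (real n - 1) * (real n - 2) * (real n - 3) * (real n - 4) * t^4
              - (real n - 2) * (real n - 3) * t^2 + 1 = 0)"
    if h4: "E 4 = 0" and h2: "E 2 = 0" and h1: "E 1 = 0"
  proof -
    define T2 where "T2 = 2 / 15 * (2*x+5) * (2*x+4) * (2*x+3) * (2*x+2) * (2*\<delta>)^4
              - (2*x+4) * (2*x+3) * (2*\<delta>)^2 + 1"
    have hf2: "f2 = - f3 * (2*x+6) / 4 - f3 * (2*x+6)*(2*x+5)/2 * \<delta>^2"
      using a4 h4 unfolding hE6 by (simp add: field_simps)
    have hf1: "f1 = (2*x+6)*(2*x+3) * f3 / 32 - f3 * (2*x+6)*(2*x+5)*(2*x+4)*(2*x+3)/24 * \<delta>^4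
       - f2 * (2*x+4)*(2*x+3)/2 * \<delta>^2"
      using a2 h4 h2 unfolding hE6 by (simp add: field_simps)
    have hE5': "E 5 = coeff Q (2*M+5) / 16" using c5 by simp
    have hE3': "E 3 = coeff Q (2*M+3) / 4 + (2*x+5) * E 5" using c3 by (simp add: field_simps)
    have z: "coeff Q (2*M+1) + (2*x+3) * (coeff Q (2*M+3) + coeff Q (2*M+5) * (2*x+5) / 4) / 4
       - (2*x+5) * (2*x+2) * coeff Q (2*M+5) / 32 = 0"
      using c1 h1 unfolding hE3' hE5' by (simp add: field_simps)
    have eq: "f3 * \<delta> * (2*x+6) * T2 = -16 * (coeff Q (2*M+1) + (2*x+3) * (coeff Q (2*M+3) + coeff Q (2*M+5) * (2*x+5) / 4) / 4
       - (2*x+5) * (2*x+2) * coeff Q (2*M+5) / 32)"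
      unfolding FS hf1 hf2 T2_def by (simp add: field_simps power_numeral_reduce)
    have "f3 * \<delta> * (2*x+6) * T2 = 0" using eq[unfolded z] by simp
    then have "\<delta> = 0 \<or> T2 = 0" using f3nz x0 by simp
    then show ?thesis unfolding rn T2_def Let_def by (auto simp: algebra_simps)
  qed
  show ?thesis using part1 part2 Ch2 Ch3 Ch4 Ch5 EZ by metis
qed
end
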